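(* Let $G=(V,E)$ be a finite connected chordal (decomposable) graph with $V=\{1,\dots,n\}$, and let $(C_1,\dots,C_k)$ be a perfect ordering of its cliques. For $q=2,\dots,k$ let $H_q=C_1\cup\dots\cup C_q$ (with $H_1=C_1$), $S_q=C_q\cap H_{q-1}$, $A_q=H_{q-1}\setminus S_q$ and $B_q=C_q\setminus S_q$. Let $N$ be a symmetric positive definite $n\times n$ real matrix and $M=N_G$. Then $M$ is positive definite if and only if for every $2\le q\le k$, $$S_1^{(q)}+S_2^{(q)}-M_{S_qS_q}$$ is positive definite, where $S_1^{(q)}=M_{S_qS_q}-M_{S_qA_q}M_{A_qA_q}^{-1}M_{A_qS_q}$ and $S_2^{(q)}=M_{S_qS_q}-M_{S_qB_q}M_{B_qB_q}^{-1}M_{B_qS_q}$.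
   Context: A graph is chordal (decomposable) if it has no induced cycle of length $\ge 4$. A clique is a maximal complete induced subgraph (identified with its vertex set). An ordering $(C_1,\dots,C_k)$ of the cliques is perfect if for every $q=2,\dots,k$ there exists $p\le q-1$ with $C_q\cap (C_1\cup\dots\cup C_{q-1})\subseteq C_p$. For a symmetric $n\times n$ real matrix $N=(n_{ij})$, $N_G$ is defined by $(N_G)_{ij}=n_{ij}$ if $i=j$ or $(i,j)\in E$, and $0$ otherwise. For $X,Y\subseteq V$, $M_{XY}$ is the submatrix of $M$ with rows in $X$ and columns in $Y$. *)

theory Defs
  imports Complex_Main
begin

(* Simple graphs on a finite vertex set V with edge set E of ordered pairs
   (symmetric, irreflexive). Matrices are functions nat => nat => real,
   considered on explicit finite index sets. *)

definition simple_graph :: "nat set \<Rightarrow> (nat \<times> nat) set \<Rightarrow> bool" where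
  "simple_graph V E \<longleftrightarrow> E \<subseteq> V \<times> V \<and> (\<forall>i j. (i, j) \<in> E \<longrightarrow> (j, i) \<in> E) \<and> (\<forall>i. (i, i) \<notin> E)"

definition connected_graph :: "nat set \<Rightarrow> (nat \<times> nat) set \<Rightarrow> bool" where
  "connected_graph V E \<longleftrightarrow> (\<forall>u\<in>V. \<forall>v\<in>V. (u, v) \<in> (E \<inter> (V \<times> V))\<^sup>*)"

definition induced_cycle :: "(nat \<times> nat) set \<Rightarrow> nat list \<Rightarrow> bool" where
  "induced_cycle E vs \<longleftrightarrow> distinct vs \<and> length vs \<ge> 3 \<and>
     (\<forall>i < length vs. \<forall>j < length vs.
        ((vs ! i, vs ! j) \<in> E \<longleftrightarrow> (j = Suc i mod length vs \<or> i = Suc j mod length vs)))"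

definition chordal :: "nat set \<Rightarrow> (nat \<times> nat) set \<Rightarrow> bool" where
  "chordal V E \<longleftrightarrow> \<not> (\<exists>vs. set vs \<subseteq> V \<and> length vs \<ge> 4 \<and> induced_cycle E vs)"

definition complete_set :: "nat set \<Rightarrow> (nat \<times> nat) set \<Rightarrow> nat set \<Rightarrow> bool" where
  "complete_set V E C \<longleftrightarrow> C \<subseteq> V \<and> (\<forall>i\<in>C. \<forall>j\<in>C. i \<noteq> j \<longrightarrow> (i, j) \<in> E)"

definition is_clique :: "nat set \<Rightarrow> (nat \<times> nat) set \<Rightarrow> nat set \<Rightarrow> bool" where
  "is_clique V E C \<longleftrightarrow> complete_set V E C \<and> (\<forall>D. complete_set V E D \<and> C \<subseteq> D \<longrightarrow> D = C)"

definition clique_ordering :: "nat set \<Rightarrow> (nat \<times> nat) set \<Rightarrow> nat set list \<Rightarrow> bool" where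
  "clique_ordering V E Cs \<longleftrightarrow> distinct Cs \<and> set Cs = {C. is_clique V E C}"

(* perfect ordering; paper index q = list index q+1 *)
definition perfect_ordering :: "nat set \<Rightarrow> (nat \<times> nat) set \<Rightarrow> nat set list \<Rightarrow> bool" where
  "perfect_ordering V E Cs \<longleftrightarrow> clique_ordering V E Cs \<and>
     (\<forall>q. 1 \<le> q \<and> q < length Cs \<longrightarrow>
        (\<exists>p < q. Cs ! q \<inter> \<Union> (set (take q Cs)) \<subseteq> Cs ! p))"

definition sym_on :: "nat set \<Rightarrow> (nat \<Rightarrow> nat \<Rightarrow> real) \<Rightarrow> bool" where
  "sym_on I M \<longleftrightarrow> (\<forall>i\<in>I. \<forall>j\<in>I. M i j = M j i)"

definition pos_def_on :: "nat set \<Rightarrow> (nat \<Rightarrow> nat \<Rightarrow> real) \<Rightarrow> bool" where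
  "pos_def_on I M \<longleftrightarrow> sym_on I M \<and>
     (\<forall>x :: nat \<Rightarrow> real. (\<exists>i\<in>I. x i \<noteq> 0) \<longrightarrow> (\<Sum>i\<in>I. \<Sum>j\<in>I. x i * M i j * x j) > 0)"

definition mat_mul_on :: "nat set \<Rightarrow> (nat \<Rightarrow> nat \<Rightarrow> real) \<Rightarrow> (nat \<Rightarrow> nat \<Rightarrow> real) \<Rightarrow> nat \<Rightarrow> nat \<Rightarrow> real" where
  "mat_mul_on K X Y = (\<lambda>i j. \<Sum>k\<in>K. X i k * Y k j)"

(* inverse of the submatrix M_AA (indexed by A); unspecified if singular *)
definition mat_inv_on :: "nat set \<Rightarrow> (nat \<Rightarrow> nat \<Rightarrow> real) \<Rightarrow> nat \<Rightarrow> nat \<Rightarrow> real" where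
  "mat_inv_on A M = (SOME P. \<forall>i\<in>A. \<forall>j\<in>A.
       (\<Sum>k\<in>A. M i k * P k j) = (if i = j then 1 else 0) \<and>
       (\<Sum>k\<in>A. P i k * M k j) = (if i = j then 1 else 0))"

definition schur_on :: "nat set \<Rightarrow> (nat \<Rightarrow> nat \<Rightarrow> real) \<Rightarrow> nat \<Rightarrow> nat \<Rightarrow> real" where
  "schur_on A M = (\<lambda>i j. M i j - mat_mul_on A (mat_mul_on A M (mat_inv_on A M)) M i j)"

definition graph_restrict :: "(nat \<times> nat) set \<Rightarrow> (nat \<Rightarrow> nat \<Rightarrow> real) \<Rightarrow> nat \<Rightarrow> nat \<Rightarrow> real" where
  "graph_restrict E N = (\<lambda>i j. if i = j \<or> (i, j) \<in> E then N i j else 0)"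

end

theory Submission
  imports Defs
begin

definition mv :: "nat set \<Rightarrow> (nat \<Rightarrow> nat \<Rightarrow> real) \<Rightarrow> (nat \<Rightarrow> real) \<Rightarrow> nat \<Rightarrow> real" where
  "mv A M x i = (\<Sum>j\<in>A. M i j * x j)"
definition dot :: "nat set \<Rightarrow> (nat \<Rightarrow> real) \<Rightarrow> (nat \<Rightarrow> real) \<Rightarrow> real" where
  "dot A x y = (\<Sum>i\<in>A. x i * y i)"
definition qf :: "nat set \<Rightarrow> (nat \<Rightarrow> nat \<Rightarrow> real) \<Rightarrow> (nat \<Rightarrow> real) \<Rightarrow> real" where
  "qf A M x = (\<Sum>i\<in>A. \<Sum>j\<in>A. x i * M i j * x j)"
definition is_inv :: "nat set \<Rightarrow> (nat \<Rightarrow> nat \<Rightarrow> real) \<Rightarrow> (nat \<Rightarrow> nat \<Rightarrow> real) \<Rightarrow> bool" where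
  "is_inv A M P \<longleftrightarrow> (\<forall>i\<in>A. \<forall>j\<in>A.
       (\<Sum>k\<in>A. M i k * P k j) = (if i = j then 1 else 0) \<and>
       (\<Sum>k\<in>A. P i k * M k j) = (if i = j then 1 else 0))"

lemma qf_dot: "qf A M x = dot A x (mv A M x)"
  unfolding qf_def dot_def mv_def by (simp add: sum_distrib_left mult.assoc)

lemma pd_qf: "pos_def_on A M \<longleftrightarrow> sym_on A M \<and> (\<forall>x. (\<exists>i\<in>A. x i \<noteq> 0) \<longrightarrow> qf A M x > 0)"
  unfolding pos_def_on_def qf_def by simp

lemma qf_cong: "(\<And>i. i \<in> A \<Longrightarrow> x i = y i) \<Longrightarrow> (\<And>i j. i \<in> A \<Longrightarrow> j \<in> A \<Longrightarrow> M i j = M' i j) \<Longrightarrow> qf A M x = qf A M' y"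
  unfolding qf_def by (intro sum.cong) auto

lemma qf_zero: "(\<And>i. i \<in> A \<Longrightarrow> x i = 0) \<Longrightarrow> qf A M x = 0"
  unfolding qf_def by simp

lemma pd_nonneg: "pos_def_on A M \<Longrightarrow> qf A M x \<ge> 0"
  unfolding pd_qf by (cases "\<exists>i\<in>A. x i \<noteq> 0") (auto simp: qf_zero less_imp_le)

lemma pd_cong: "(\<And>i j. i \<in> A \<Longrightarrow> j \<in> A \<Longrightarrow> M i j = M' i j) \<Longrightarrow> pos_def_on A M = pos_def_on A M'"
proof -
  assume h: "\<And>i j. i \<in> A \<Longrightarrow> j \<in> A \<Longrightarrow> M i j = M' i j"
  have "\<And>x. qf A M x = qf A M' x" by (rule qf_cong) (auto simp: h)
  thus ?thesis unfolding pd_qf sym_on_def using h by auto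
qed

lemma pd_sub: assumes "pos_def_on I M" "J \<subseteq> I" "finite I" shows "pos_def_on J M"
proof -
  have sym: "sym_on J M" using assms unfolding pd_qf sym_on_def by blast
  { fix x :: "nat \<Rightarrow> real" assume "\<exists>i\<in>J. x i \<noteq> 0"
    define x' where "x' = (\<lambda>i. if i \<in> J then x i else 0)"
    have "\<exists>i\<in>I. x' i \<noteq> 0" using \<open>\<exists>i\<in>J. x i \<noteq> 0\<close> assms(2) unfolding x'_def by auto
    hence "qf I M x' > 0" using assms(1) unfolding pd_qf by blast
    moreover have "qf I M x' = qf J M x"
    proof -
      have "qf I M x' = (\<Sum>i\<in>I. \<Sum>j\<in>I. x' i * M i j * x' j)" by (simp add: qf_def)
      also have "\<dots> = (\<Sum>i\<in>J. \<Sum>j\<in>I. x' i * M i j * x' j)"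
        by (rule sum.mono_neutral_right) (use assms in \<open>auto simp: x'_def\<close>)
      also have "\<dots> = (\<Sum>i\<in>J. \<Sum>j\<in>J. x' i * M i j * x' j)"
        by (intro sum.cong refl sum.mono_neutral_right) (use assms in \<open>auto simp: x'_def\<close>)
      also have "\<dots> = qf J M x" unfolding qf_def by (intro sum.cong) (auto simp: x'_def)
      finally show ?thesis .
    qed
    ultimately have "qf J M x > 0" by simp }
  thus ?thesis using sym unfolding pd_qf by blast
qed

lemma inv_cong: "(\<And>i j. i \<in> A \<Longrightarrow> j \<in> A \<Longrightarrow> M i j = M' i j) \<Longrightarrow> mat_inv_on A M = mat_inv_on A M'"
  unfolding mat_inv_on_def
  by (rule arg_cong[where f = Eps], rule ext) (simp cong: sum.cong)

lemma inv_some: "is_inv A M P \<Longrightarrow> is_inv A M (mat_inv_on A M)"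
  unfolding mat_inv_on_def is_inv_def by (rule someI[where x=P])

lemma inv_sym: assumes "is_inv A M P" "sym_on A M" "finite A" shows "sym_on A P"
  unfolding sym_on_def
proof (intro ballI)
  fix i j assume ij: "i \<in> A" "j \<in> A"
  have L: "\<And>a b. a \<in> A \<Longrightarrow> b \<in> A \<Longrightarrow> (\<Sum>k\<in>A. P a k * M k b) = (if a = b then 1 else 0)"
    using assms(1) unfolding is_inv_def by blast
  have "(\<Sum>k\<in>A. \<Sum>l\<in>A. P i k * M k l * P j l) = (\<Sum>k\<in>A. P i k * (\<Sum>l\<in>A. P j l * M l k))"
    using assms(2) by (auto simp: sum_distrib_left sym_on_def mult_ac intro!: sum.cong)
  also have "\<dots> = (\<Sum>k\<in>A. P i k * (if j = k then 1 else 0))" using L ij by (intro sum.cong) auto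
  also have "\<dots> = P i j" using ij assms(3) by (simp add: if_distrib cong: if_cong)
  finally have 1: "(\<Sum>k\<in>A. \<Sum>l\<in>A. P i k * M k l * P j l) = P i j" .
  have "(\<Sum>k\<in>A. \<Sum>l\<in>A. P i k * M k l * P j l) = (\<Sum>l\<in>A. (\<Sum>k\<in>A. P i k * M k l) * P j l)"
    by (subst sum.swap) (simp add: sum_distrib_right)
  also have "\<dots> = (\<Sum>l\<in>A. (if i = l then 1 else 0) * P j l)" using L ij by (intro sum.cong) auto
  also have "\<dots> = (\<Sum>l\<in>A. if l = i then P j l else 0)" by (intro sum.cong) auto
  also have "\<dots> = P j i" using ij assms(3) by (simp add: sum.delta)
  finally show "P i j = P j i" using 1 by simp
qed

lemma mv_union: "finite A \<Longrightarrow> finite T \<Longrightarrow> A \<inter> T = {} \<Longrightarrow> mv (A \<union> T) M x i = mv A M x i + mv T M x i"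
  unfolding mv_def by (rule sum.union_disjoint)

lemma dot_union: "finite A \<Longrightarrow> finite T \<Longrightarrow> A \<inter> T = {} \<Longrightarrow> dot (A \<union> T) x y = dot A x y + dot T x y"
  unfolding dot_def by (rule sum.union_disjoint)

lemma dot_add_right: "dot A x (\<lambda>i. y i + z i) = dot A x y + dot A x z"
  unfolding dot_def by (simp add: distrib_left sum.distrib)

lemma dot_add_left: "dot A (\<lambda>i. y i + z i) x = dot A y x + dot A z x"
  unfolding dot_def by (simp add: distrib_right sum.distrib)

lemma dot_cong: "(\<And>i. i \<in> A \<Longrightarrow> x i = x' i) \<Longrightarrow> (\<And>i. i \<in> A \<Longrightarrow> y i = y' i) \<Longrightarrow> dot A x y = dot A x' y'"
  unfolding dot_def by (intro sum.cong) auto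

lemma mv_add: "mv A M (\<lambda>i. x i + y i) i = mv A M x i + mv A M y i"
  unfolding mv_def by (simp add: distrib_left sum.distrib)

lemma dot_mv_sym:
  assumes "\<And>i j. i \<in> A \<Longrightarrow> j \<in> T \<Longrightarrow> M i j = M j i"
  shows "dot A x (mv T M y) = dot T y (mv A M x)"
proof -
  have "dot A x (mv T M y) = (\<Sum>i\<in>A. \<Sum>j\<in>T. x i * M i j * y j)"
    unfolding dot_def mv_def by (simp add: sum_distrib_left mult.assoc)
  also have "\<dots> = (\<Sum>j\<in>T. \<Sum>i\<in>A. x i * M i j * y j)" by (rule sum.swap)
  also have "\<dots> = dot T y (mv A M x)"
    unfolding dot_def mv_def using assms by (auto simp: sum_distrib_left mult_ac intro!: sum.cong)
  finally show ?thesis .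
qed

lemma mv_inv:
  assumes "is_inv A M P" "i \<in> A" "finite A"
  shows "mv A M (mv A P b) i = b i"
proof -
  have "mv A M (mv A P b) i = (\<Sum>j\<in>A. \<Sum>l\<in>A. M i j * P j l * b l)"
    unfolding mv_def by (simp add: sum_distrib_left mult.assoc)
  also have "\<dots> = (\<Sum>l\<in>A. \<Sum>j\<in>A. M i j * P j l * b l)" by (rule sum.swap)
  also have "\<dots> = (\<Sum>l\<in>A. (\<Sum>j\<in>A. M i j * P j l) * b l)" by (simp add: sum_distrib_right)
  also have "\<dots> = (\<Sum>l\<in>A. if l = i then b l else 0)"
    using assms unfolding is_inv_def by (intro sum.cong) auto
  also have "\<dots> = b i" using assms by (simp add: sum.delta)
  finally show ?thesis .
qed

definition schurP :: "nat set \<Rightarrow> (nat \<Rightarrow> nat \<Rightarrow> real) \<Rightarrow> (nat \<Rightarrow> nat \<Rightarrow> real) \<Rightarrow> nat \<Rightarrow> nat \<Rightarrow> real" where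
  "schurP A M P = (\<lambda>i j. M i j - mat_mul_on A (mat_mul_on A M P) M i j)"

lemma schur_term:
  assumes "\<And>i j. i \<in> A \<Longrightarrow> j \<in> T \<Longrightarrow> M i j = M j i"
  shows "(\<Sum>i\<in>T. \<Sum>j\<in>T. x i * mat_mul_on A (mat_mul_on A M P) M i j * x j)
     = dot A (mv A P (mv T M x)) (mv T M x)"
proof -
  let ?b = "mv T M x"
  have s2: "\<And>i l. i \<in> T \<Longrightarrow> l \<in> A \<Longrightarrow> M i l = M l i" using assms by metis
  have "(\<Sum>i\<in>T. \<Sum>j\<in>T. x i * mat_mul_on A (mat_mul_on A M P) M i j * x j)
      = (\<Sum>i\<in>T. \<Sum>j\<in>T. \<Sum>k\<in>A. \<Sum>l\<in>A. x i * M i l * P l k * M k j * x j)"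
    unfolding mat_mul_on_def by (simp add: sum_distrib_left sum_distrib_right mult_ac)
  also have "\<dots> = (\<Sum>i\<in>T. \<Sum>k\<in>A. \<Sum>j\<in>T. \<Sum>l\<in>A. x i * M i l * P l k * M k j * x j)"
    by (rule sum.cong[OF refl], rule sum.swap)
  also have "\<dots> = (\<Sum>i\<in>T. \<Sum>k\<in>A. \<Sum>l\<in>A. \<Sum>j\<in>T. x i * M i l * P l k * M k j * x j)"
    by (rule sum.cong[OF refl], rule sum.cong[OF refl], rule sum.swap)
  also have "\<dots> = (\<Sum>k\<in>A. \<Sum>i\<in>T. \<Sum>l\<in>A. \<Sum>j\<in>T. x i * M i l * P l k * M k j * x j)"
    by (rule sum.swap)
  also have "\<dots> = (\<Sum>k\<in>A. \<Sum>l\<in>A. \<Sum>i\<in>T. \<Sum>j\<in>T. x i * M i l * P l k * M k j * x j)"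
    by (rule sum.cong[OF refl], rule sum.swap)
  also have "\<dots> = (\<Sum>k\<in>A. \<Sum>l\<in>A. ?b l * P l k * ?b k)"
    unfolding mv_def using s2
    by (auto simp: sum_distrib_left sum_distrib_right mult_ac intro!: sum.cong)
  also have "\<dots> = (\<Sum>l\<in>A. \<Sum>k\<in>A. ?b l * P l k * ?b k)" by (rule sum.swap)
  also have "\<dots> = dot A (mv A P ?b) ?b"
    unfolding dot_def mv_def[of A P] by (simp add: sum_distrib_left sum_distrib_right mult_ac)
  finally show ?thesis .
qed

lemma qf_ident:
  assumes fin: "finite A" "finite T" and dis: "A \<inter> T = {}" and sym: "sym_on (A \<union> T) M"
    and inv: "is_inv A M P"
  shows "qf (A \<union> T) M x = qf A M (\<lambda>i. x i + mv A P (mv T M x) i) + qf T (schurP A M P) x"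
proof -
  define b where "b = mv T M x"
  define w where "w = mv A P b"
  have sAT: "\<And>i j. i \<in> A \<Longrightarrow> j \<in> T \<Longrightarrow> M i j = M j i" using sym unfolding sym_on_def by blast
  have sA: "\<And>i j. i \<in> A \<Longrightarrow> j \<in> A \<Longrightarrow> M i j = M j i" using sym unfolding sym_on_def by blast
  have Mw: "\<And>i. i \<in> A \<Longrightarrow> mv A M w i = b i" unfolding w_def using mv_inv[OF inv _ fin(1)] by blast
  have "qf (A \<union> T) M x = dot (A \<union> T) x (\<lambda>i. mv A M x i + mv T M x i)"
  proof -
    have "mv (A \<union> T) M x = (\<lambda>i. mv A M x i + mv T M x i)" by (rule ext) (rule mv_union[OF fin dis])
    thus ?thesis unfolding qf_dot by simp
  qed
  also have "\<dots> = dot A x (mv A M x) + dot A x b + dot T x (mv A M x) + dot T x (mv T M x)"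
    unfolding dot_union[OF fin dis] dot_add_right b_def by simp
  finally have 1: "qf (A \<union> T) M x = dot A x (mv A M x) + dot A x b + dot T x (mv A M x) + dot T x (mv T M x)" .
  have 2: "dot T x (mv A M x) = dot A x b" unfolding b_def using dot_mv_sym[of A T M x x, OF sAT] by simp
  have "qf A M (\<lambda>i. x i + w i) = dot A (\<lambda>i. x i + w i) (\<lambda>i. mv A M x i + mv A M w i)"
    unfolding qf_dot mv_add by simp
  also have "\<dots> = dot A (\<lambda>i. x i + w i) (\<lambda>i. mv A M x i + b i)"
    by (rule dot_cong) (auto simp: Mw)
  also have "\<dots> = dot A x (mv A M x) + dot A x b + dot A w (mv A M x) + dot A w b"
    unfolding dot_add_left dot_add_right by simp
  finally have 3: "qf A M (\<lambda>i. x i + w i) = dot A x (mv A M x) + dot A x b + dot A w (mv A M x) + dot A w b" .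
  have "dot A w (mv A M x) = dot A x (mv A M w)" using dot_mv_sym[of A A M w x] sA by simp
  also have "\<dots> = dot A x b" by (rule dot_cong) (auto simp: Mw)
  finally have 4: "dot A w (mv A M x) = dot A x b" .
  have "qf T (schurP A M P) x = (\<Sum>i\<in>T. \<Sum>j\<in>T. x i * M i j * x j - x i * mat_mul_on A (mat_mul_on A M P) M i j * x j)"
    unfolding qf_def schurP_def by (simp add: algebra_simps)
  also have "\<dots> = qf T M x - (\<Sum>i\<in>T. \<Sum>j\<in>T. x i * mat_mul_on A (mat_mul_on A M P) M i j * x j)"
    unfolding qf_def by (simp add: sum_subtractf)
  also have "\<dots> = dot T x (mv T M x) - dot A w b"
    unfolding qf_dot w_def b_def using schur_term[OF sAT, where x=x and P=P] by simp
  finally have 5: "qf T (schurP A M P) x = dot T x (mv T M x) - dot A w b" .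
  show ?thesis using 1 2 3 4 5 unfolding w_def b_def by linarith
qed

lemma schur_sym:
  assumes fin: "finite A" and sym: "sym_on (A \<union> T) M" and inv: "is_inv A M P"
  shows "sym_on T (schurP A M P)"
proof -
  have sP: "sym_on A P" using inv_sym[OF inv _ fin] sym unfolding sym_on_def by blast
  have R: "\<And>i j. mat_mul_on A (mat_mul_on A M P) M i j = (\<Sum>k\<in>A. \<Sum>l\<in>A. M i l * P l k * M k j)"
    unfolding mat_mul_on_def by (simp add: sum_distrib_right)
  { fix i j assume ij: "i \<in> T" "j \<in> T"
    have "(\<Sum>k\<in>A. \<Sum>l\<in>A. M j l * P l k * M k i) = (\<Sum>l\<in>A. \<Sum>k\<in>A. M j l * P l k * M k i)"
      by (rule sum.swap)
    also have "\<dots> = (\<Sum>l\<in>A. \<Sum>k\<in>A. M i k * P k l * M l j)"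
      using sym sP ij unfolding sym_on_def by (intro sum.cong refl) (simp add: mult_ac)
    finally have "mat_mul_on A (mat_mul_on A M P) M j i = mat_mul_on A (mat_mul_on A M P) M i j"
      unfolding R by simp
    hence "schurP A M P i j = schurP A M P j i" using sym ij unfolding schurP_def sym_on_def by simp }
  thus ?thesis unfolding sym_on_def by blast
qed

lemma block:
  assumes fin: "finite A" "finite T" and dis: "A \<inter> T = {}" and sym: "sym_on (A \<union> T) M"
    and pd: "pos_def_on A M" and inv: "is_inv A M P"
  shows "pos_def_on (A \<union> T) M \<longleftrightarrow> pos_def_on T (schurP A M P)"
proof
  assume L: "pos_def_on (A \<union> T) M"
  { fix y :: "nat \<Rightarrow> real" assume y: "\<exists>i\<in>T. y i \<noteq> 0"
    define x where "x = (\<lambda>i. if i \<in> T then y i else - mv A P (mv T M y) i)"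
    have mvx: "mv T M x = mv T M y" unfolding mv_def x_def by (intro ext sum.cong) auto
    obtain i where "i \<in> T" "y i \<noteq> 0" using y by blast
    hence "\<exists>i\<in>A \<union> T. x i \<noteq> 0" unfolding x_def by auto
    hence "qf (A \<union> T) M x > 0" using L unfolding pd_qf by blast
    moreover have "qf A M (\<lambda>i. x i + mv A P (mv T M x) i) = 0"
    proof (rule qf_zero)
      fix i assume "i \<in> A"
      hence "x i = - mv A P (mv T M y) i" using dis unfolding x_def by auto
      thus "x i + mv A P (mv T M x) i = 0" unfolding mvx by simp
    qed
    moreover have "qf T (schurP A M P) x = qf T (schurP A M P) y" by (rule qf_cong) (auto simp: x_def)
    ultimately have "qf T (schurP A M P) y > 0" using qf_ident[OF fin dis sym inv, of x] by simp }
  thus "pos_def_on T (schurP A M P)" unfolding pd_qf using schur_sym[OF fin(1) sym inv] by blast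
next
  assume R: "pos_def_on T (schurP A M P)"
  { fix x :: "nat \<Rightarrow> real" assume x: "\<exists>i\<in>A \<union> T. x i \<noteq> 0"
    have "qf (A \<union> T) M x > 0"
    proof (cases "\<exists>i\<in>T. x i \<noteq> 0")
      case True
      hence "qf T (schurP A M P) x > 0" using R unfolding pd_qf by blast
      moreover have "qf A M (\<lambda>i. x i + mv A P (mv T M x) i) \<ge> 0" by (rule pd_nonneg[OF pd])
      ultimately show ?thesis using qf_ident[OF fin dis sym inv, of x] by linarith
    next
      case False
      hence z: "\<And>i. mv T M x i = 0" unfolding mv_def by simp
      have z2: "\<And>i. mv A P (mv T M x) i = 0" by (simp add: mv_def[of A P] z)
      have "qf T (schurP A M P) x = 0" using False by (intro qf_zero) auto
      moreover have "qf A M (\<lambda>i. x i + mv A P (mv T M x) i) > 0"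
        using pd x False unfolding pd_qf z2 by auto
      ultimately show ?thesis using qf_ident[OF fin dis sym inv, of x] by simp
    qed }
  thus "pos_def_on (A \<union> T) M" unfolding pd_qf using sym by blast
qed

lemma inv_exists: "finite A \<Longrightarrow> pos_def_on A M \<Longrightarrow> \<exists>P. is_inv A M P"
proof (induction A rule: finite_induct)
  case empty
  show ?case unfolding is_inv_def by simp
next
  case (insert a A')
  have pdA: "pos_def_on A' M" using pd_sub[OF insert.prems] insert.hyps by blast
  then obtain P' where P': "is_inv A' M P'" using insert.IH by blast
  have symM: "sym_on (A' \<union> {a}) M" using insert.prems unfolding pd_qf by simp
  have sM: "\<And>i j. i \<in> insert a A' \<Longrightarrow> j \<in> insert a A' \<Longrightarrow> M i j = M j i"
    using insert.prems unfolding pd_qf sym_on_def by blast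
  have sP: "\<And>i j. i \<in> A' \<Longrightarrow> j \<in> A' \<Longrightarrow> P' i j = P' j i"
    using inv_sym[OF P' _ insert.hyps(1)] sM unfolding sym_on_def by blast
  have rP: "\<And>i j. i \<in> A' \<Longrightarrow> j \<in> A' \<Longrightarrow> (\<Sum>k\<in>A'. M i k * P' k j) = (if i = j then 1 else 0)"
    using P' unfolding is_inv_def by blast
  have "pos_def_on (A' \<union> {a}) M" using insert.prems by simp
  hence "pos_def_on {a} (schurP A' M P')"
    using block[OF insert.hyps(1) _ _ symM pdA P'] insert.hyps(2) by simp
  hence "qf {a} (schurP A' M P') (\<lambda>i. 1) > 0" unfolding pd_qf by auto
  hence spos: "schurP A' M P' a a > 0" unfolding qf_def by simp
  define s where "s = schurP A' M P' a a"
  define u where "u = mv A' P' (\<lambda>l. M l a)"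
  have f1: "\<And>i. i \<in> A' \<Longrightarrow> (\<Sum>k\<in>A'. M i k * u k) = M i a"
    using mv_inv[OF P' _ insert.hyps(1), of _ "\<lambda>l. M l a"] unfolding u_def mv_def[of A' M] by simp
  have f2: "\<And>j. j \<in> A' \<Longrightarrow> (\<Sum>k\<in>A'. M a k * P' k j) = u j"
    unfolding u_def mv_def using sM sP by (intro sum.cong) (auto simp: mult.commute)
  have "s = M a a - (\<Sum>k\<in>A'. (\<Sum>l\<in>A'. M a l * P' l k) * M k a)"
    unfolding s_def schurP_def mat_mul_on_def by simp
  also have "\<dots> = M a a - (\<Sum>k\<in>A'. M a k * u k)"
    using f2 sM by (intro arg_cong2[where f="(-)"] refl sum.cong) (auto simp: mult.commute)
  finally have f3: "s = M a a - (\<Sum>k\<in>A'. M a k * u k)" .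
  have s0: "s > 0" using spos s_def by simp
  define P where "P = (\<lambda>i j. if i = a \<and> j = a then 1 / s else if i = a then - u j / s
     else if j = a then - u i / s else P' i j + u i * u j / s)"
  have symP: "\<And>i j. i \<in> insert a A' \<Longrightarrow> j \<in> insert a A' \<Longrightarrow> P i j = P j i"
    unfolding P_def using sP by (auto simp: mult.commute)
  have R: "(\<Sum>k\<in>insert a A'. M i k * P k j) = (if i = j then 1 else 0)"
    if ij: "i \<in> insert a A'" "j \<in> insert a A'" for i j
  proof -
    have split: "(\<Sum>k\<in>insert a A'. M i k * P k j) = M i a * P a j + (\<Sum>k\<in>A'. M i k * P k j)"
      using insert.hyps by simp
    have Pk: "\<And>k. k \<in> A' \<Longrightarrow> P k j = (if j = a then - u k / s else P' k j + u k * u j / s)"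
      unfolding P_def using insert.hyps(2) by auto
    have Paa: "P a a = 1 / s" unfolding P_def by simp
    have Paj: "\<And>j. j \<in> A' \<Longrightarrow> P a j = - u j / s" unfolding P_def using insert.hyps(2) by auto
    have Pja: "\<And>j. j \<in> A' \<Longrightarrow> P j a = - u j / s" unfolding P_def using insert.hyps(2) by auto
    show ?thesis
    proof (cases "j = a")
      case True
      have sumeq: "(\<Sum>k\<in>A'. M i k * P k j) = - (\<Sum>k\<in>A'. M i k * u k) / s"
        using Pk True by (simp add: sum_divide_distrib sum_negf)
      show ?thesis
      proof (cases "i = a")
        case True
        have "M a a * (1 / s) + - (\<Sum>k\<in>A'. M a k * u k) / s = (M a a - (\<Sum>k\<in>A'. M a k * u k)) / s"
          by (simp add: diff_divide_distrib)
        also have "\<dots> = 1" using f3 s0 by simp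
        finally show ?thesis unfolding split sumeq using True \<open>j = a\<close> Paa by simp
      next
        case False
        hence "i \<in> A'" using ij by simp
        show ?thesis unfolding split sumeq using \<open>j = a\<close> False Paa f1[OF \<open>i \<in> A'\<close>] s0
          by (simp add: field_simps)
      qed
    next
      case False
      hence jA: "j \<in> A'" using ij by simp
      have sumeq: "(\<Sum>k\<in>A'. M i k * P k j) = (\<Sum>k\<in>A'. M i k * P' k j) + (\<Sum>k\<in>A'. M i k * u k) * u j / s"
      proof -
        have "(\<Sum>k\<in>A'. M i k * P k j) = (\<Sum>k\<in>A'. M i k * P' k j + M i k * u k * (u j / s))"
          using Pk False by (intro sum.cong) (auto simp: algebra_simps)
        also have "\<dots> = (\<Sum>k\<in>A'. M i k * P' k j) + (\<Sum>k\<in>A'. M i k * u k) * (u j / s)"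
          by (simp only: sum.distrib sum_distrib_right)
        finally show ?thesis by simp
      qed
      show ?thesis
      proof (cases "i = a")
        case True
        have "M a a * (- u j / s) + (u j + (\<Sum>k\<in>A'. M a k * u k) * u j / s) = u j * (1 - (M a a - (\<Sum>k\<in>A'. M a k * u k)) / s)"
          using s0 by (simp add: field_simps)
        also have "\<dots> = 0" using f3 s0 by simp
        finally show ?thesis unfolding split sumeq using True False Paj[OF jA] f2[OF jA] by simp
      next
        case iF: False
        hence iA: "i \<in> A'" using ij by simp
        show ?thesis unfolding split sumeq Paj[OF jA] f1[OF iA] rP[OF iA jA] using False iF s0
          by (simp add: field_simps)
      qed
    qed
  qed
  have L: "(\<Sum>k\<in>insert a A'. P i k * M k j) = (if i = j then 1 else 0)"
    if ij: "i \<in> insert a A'" "j \<in> insert a A'" for i j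
  proof -
    have "(\<Sum>k\<in>insert a A'. P i k * M k j) = (\<Sum>k\<in>insert a A'. M j k * P k i)"
      using ij symP sM by (intro sum.cong refl) (simp add: mult.commute)
    also have "\<dots> = (if i = j then 1 else 0)" using R[OF ij(2,1)] by simp
    finally show ?thesis .
  qed
  show ?case using R L unfolding is_inv_def by blast
qed

lemma block_schur:
  assumes fin: "finite A" "finite T" and dis: "A \<inter> T = {}" and sym: "sym_on (A \<union> T) M"
    and pd: "pos_def_on A M"
  shows "pos_def_on (A \<union> T) M \<longleftrightarrow> pos_def_on T (schur_on A M)"
proof -
  obtain P where "is_inv A M P" using inv_exists[OF fin(1) pd] by blast
  hence "is_inv A M (mat_inv_on A M)" by (rule inv_some)
  from block[OF fin dis sym pd this] show ?thesis unfolding schurP_def schur_on_def .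
qed

lemma schur_on_sym:
  assumes fin: "finite A" and sym: "sym_on (A \<union> T) M" and pd: "pos_def_on A M"
  shows "sym_on T (schur_on A M)"
proof -
  obtain P where "is_inv A M P" using inv_exists[OF fin(1) pd] by blast
  hence "is_inv A M (mat_inv_on A M)" by (rule inv_some)
  from schur_sym[OF fin sym this] show ?thesis unfolding schurP_def schur_on_def .
qed

lemma step:
  assumes fin: "finite H" "finite C" and sym: "sym_on (H \<union> C) M" and pdC: "pos_def_on C M"
    and zero: "\<And>a b. a \<in> H - C \<Longrightarrow> b \<in> C - H \<Longrightarrow> M a b = 0 \<and> M b a = 0"
  shows "pos_def_on (H \<union> C) M \<longleftrightarrow> pos_def_on H M \<and>
    pos_def_on (C \<inter> H) (\<lambda>i j. schur_on (H - C \<inter> H) M i j + schur_on (C - C \<inter> H) M i j - M i j)"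
proof -
  define S where "S = C \<inter> H"
  define A where "A = H - S"
  define B where "B = C - S"
  define M1 where "M1 = schur_on A M"
  have finA: "finite A" "finite B" "finite S" using fin unfolding A_def B_def S_def by auto
  have sets: "H \<union> C = A \<union> (S \<union> B)" "H = A \<union> S" "A \<inter> (S \<union> B) = {}" "B \<inter> S = {}"
    "S \<union> B = B \<union> S" "B \<subseteq> C" "A \<subseteq> H" "S \<subseteq> H"
    unfolding A_def B_def S_def by auto
  have zAB: "\<And>a b. a \<in> A \<Longrightarrow> b \<in> B \<Longrightarrow> M a b = 0 \<and> M b a = 0"
    using zero unfolding A_def B_def S_def by auto
  have keyB: "M1 i j = M i j" if "i \<in> B \<or> j \<in> B" for i j
  proof -
    have "mat_mul_on A (mat_mul_on A M (mat_inv_on A M)) M i j = 0"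
      using that
    proof
      assume "j \<in> B" thus ?thesis unfolding mat_mul_on_def[of A _ M] using zAB by simp
    next
      assume "i \<in> B"
      hence "\<And>k. mat_mul_on A M (mat_inv_on A M) i k = 0" unfolding mat_mul_on_def using zAB by simp
      thus ?thesis unfolding mat_mul_on_def[of A _ M] by simp
    qed
    thus ?thesis unfolding M1_def schur_on_def by simp
  qed
  have invB: "mat_inv_on B M1 = mat_inv_on B M" by (rule inv_cong) (simp add: keyB)
  have schurB: "schur_on B M1 i j = M1 i j + schur_on B M i j - M i j" for i j
  proof -
    have "mat_mul_on B (mat_mul_on B M1 (mat_inv_on B M1)) M1 i j = mat_mul_on B (mat_mul_on B M (mat_inv_on B M)) M i j"
      unfolding invB mat_mul_on_def using keyB by (intro sum.cong refl arg_cong2[where f="(*)"]) auto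
    thus ?thesis unfolding schur_on_def by simp
  qed
  have condeq: "pos_def_on S (schur_on B M1) \<longleftrightarrow> pos_def_on S (\<lambda>i j. schur_on A M i j + schur_on B M i j - M i j)"
    by (rule pd_cong) (use schurB in \<open>simp add: M1_def\<close>)
  have symA: "sym_on (A \<union> (S \<union> B)) M" using sym sets(1) by simp
  have pdBeq: "pos_def_on B M1 \<longleftrightarrow> pos_def_on B M" by (rule pd_cong) (simp add: keyB)
  have pdB: "pos_def_on B M" using pd_sub[OF pdC sets(6) fin(2)] .
  have "pos_def_on (H \<union> C) M \<longleftrightarrow> pos_def_on H M \<and> pos_def_on S (\<lambda>i j. schur_on A M i j + schur_on B M i j - M i j)"
  proof
    assume L: "pos_def_on (H \<union> C) M"
    have pdH: "pos_def_on H M" using pd_sub[OF L _ ] fin by auto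
    have pdA: "pos_def_on A M" using pd_sub[OF pdH sets(7) fin(1)] .
    have "pos_def_on (S \<union> B) M1" using block_schur[OF finA(1) _ sets(3) symA pdA] L sets(1) finA
      unfolding M1_def by simp
    hence p1: "pos_def_on (B \<union> S) M1" using sets(5) by simp
    hence "sym_on (B \<union> S) M1" unfolding pd_qf by simp
    hence "pos_def_on S (schur_on B M1)" using block_schur[OF finA(2,3) sets(4) _ ] p1 pdB pdBeq by blast
    thus "pos_def_on H M \<and> pos_def_on S (\<lambda>i j. schur_on A M i j + schur_on B M i j - M i j)"
      using condeq pdH by simp
  next
    assume R: "pos_def_on H M \<and> pos_def_on S (\<lambda>i j. schur_on A M i j + schur_on B M i j - M i j)"
    have pdA: "pos_def_on A M" using pd_sub[OF _ sets(7) fin(1)] R by blast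
    have "sym_on (S \<union> B) M1" unfolding M1_def by (rule schur_on_sym[OF finA(1) symA pdA])
    hence symB: "sym_on (B \<union> S) M1" using sets(5) by simp
    have "pos_def_on (B \<union> S) M1"
      using block_schur[OF finA(2,3) sets(4) symB] pdB pdBeq condeq R by blast
    hence "pos_def_on (S \<union> B) M1" using sets(5) by simp
    thus "pos_def_on (H \<union> C) M" using block_schur[OF finA(1) _ sets(3) symA pdA] sets(1) finA
      unfolding M1_def by simp
  qed
  thus ?thesis unfolding S_def A_def B_def .
qed



lemma complete_in_clique:
  assumes "finite V" "complete_set V E D"
  shows "\<exists>C. is_clique V E C \<and> D \<subseteq> C"
proof -
  let ?F = "{X. complete_set V E X \<and> D \<subseteq> X}"
  have "?F \<subseteq> Pow V" unfolding complete_set_def by auto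
  hence fF: "finite ?F" using assms(1) finite_subset by blast
  have "D \<in> ?F" using assms(2) by simp
  then obtain m where m: "m \<in> ?F" "\<forall>b\<in>?F. m \<le> b \<longrightarrow> m = b"
    using finite_has_maximal[OF fF] by blast
  have "is_clique V E m" unfolding is_clique_def
  proof (intro conjI allI impI)
    show "complete_set V E m" using m by simp
    fix X assume "complete_set V E X \<and> m \<subseteq> X"
    thus "X = m" using m by auto
  qed
  thus ?thesis using m by blast
qed

lemma nth_in_take: "r < q \<Longrightarrow> r < length xs \<Longrightarrow> xs ! r \<in> set (take q xs)"
  by (metis in_set_conv_nth length_take min_less_iff_conj nth_take)

theorem theorem6:
  fixes n :: nat and E :: "(nat \<times> nat) set" and Cs :: "nat set list"
    and N :: "nat \<Rightarrow> nat \<Rightarrow> real"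
  assumes "simple_graph {1..n} E"
    and "connected_graph {1..n} E"
    and "chordal {1..n} E"
    and "perfect_ordering {1..n} E Cs"
    and "pos_def_on {1..n} N"
  shows "pos_def_on {1..n} (graph_restrict E N) \<longleftrightarrow>
    (\<forall>q. 1 \<le> q \<and> q < length Cs \<longrightarrow>
       (let M = graph_restrict E N;
            H = \<Union> (set (take q Cs));
            S = Cs ! q \<inter> H;
            A = H - S;
            B = Cs ! q - S
        in pos_def_on S (\<lambda>i j. schur_on A M i j + schur_on B M i j - M i j)))"
proof -
  define V where "V = {1..n}"
  define M where "M = graph_restrict E N"
  have finV: "finite V" unfolding V_def by simp
  have EV: "E \<subseteq> V \<times> V" using assms(1) unfolding simple_graph_def V_def by blast
  have Esym: "\<And>i j. (i, j) \<in> E \<Longrightarrow> (j, i) \<in> E" using assms(1) unfolding simple_graph_def by blast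
  have cliq: "\<And>C. C \<in> set Cs \<longleftrightarrow> is_clique V E C"
    using assms(4) unfolding perfect_ordering_def clique_ordering_def V_def by blast
  have perf: "\<And>q. 1 \<le> q \<Longrightarrow> q < length Cs \<Longrightarrow> \<exists>p<q. Cs ! q \<inter> \<Union> (set (take q Cs)) \<subseteq> Cs ! p"
    using assms(4) unfolding perfect_ordering_def by blast
  have CV: "\<And>C. C \<in> set Cs \<Longrightarrow> C \<subseteq> V" using cliq unfolding is_clique_def complete_set_def by blast
  have Ccomp: "\<And>C i j. C \<in> set Cs \<Longrightarrow> i \<in> C \<Longrightarrow> j \<in> C \<Longrightarrow> i \<noteq> j \<Longrightarrow> (i, j) \<in> E"
    using cliq unfolding is_clique_def complete_set_def by blast
  have pdN: "pos_def_on V N" using assms(5) unfolding V_def .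
  have symN: "sym_on V N" using pdN unfolding pos_def_on_def by blast
  have symM: "sym_on V M"
    unfolding sym_on_def M_def graph_restrict_def using symN Esym unfolding sym_on_def by metis
  have pdClique: "pos_def_on C M" if "C \<in> set Cs" for C
  proof -
    have "pos_def_on C N" using pd_sub[OF pdN CV[OF that] finV] .
    moreover have "pos_def_on C N = pos_def_on C M"
      by (rule pd_cong) (auto simp: M_def graph_restrict_def dest: Ccomp[OF that])
    ultimately show ?thesis by simp
  qed
  have UV: "\<Union> (set Cs) = V"
  proof
    show "\<Union> (set Cs) \<subseteq> V" using CV by blast
    show "V \<subseteq> \<Union> (set Cs)"
    proof
      fix v assume "v \<in> V"
      hence "complete_set V E {v}" unfolding complete_set_def by simp
      then obtain C where "is_clique V E C" "{v} \<subseteq> C" using complete_in_clique[OF finV] by blast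
      thus "v \<in> \<Union> (set Cs)" using cliq by blast
    qed
  qed
  have HV: "\<And>k. \<Union> (set (take k Cs)) \<subseteq> V"
  proof -
    fix k have "\<Union> (set (take k Cs)) \<subseteq> \<Union> (set Cs)" by (intro Union_mono set_take_subset)
    thus "\<Union> (set (take k Cs)) \<subseteq> V" using UV by simp
  qed
  have zero: "M a b = 0 \<and> M b a = 0"
    if q: "1 \<le> q" "q < length Cs" and ab: "a \<in> \<Union> (set (take q Cs)) - Cs ! q" "b \<in> Cs ! q - \<Union> (set (take q Cs))"
    for q a b
  proof -
    have noclq: "\<not> (a \<in> Cs ! r \<and> b \<in> Cs ! r)" if "r < length Cs" for r
      using that
    proof (induction r rule: less_induct)
      case (less r)
      show ?case
      proof (cases "r < q")
        case True
        thus ?thesis using ab nth_in_take[OF True less.prems] by blast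
      next
        case False
        show ?thesis
        proof (cases "r = q")
          case True thus ?thesis using ab by blast
        next
          case False
          hence rq: "q < r" using \<open>\<not> r < q\<close> by simp
          have aH: "a \<in> \<Union> (set (take r Cs))" using ab set_take_subset_set_take[of q r Cs] rq by auto
          have bH: "b \<in> \<Union> (set (take r Cs))" using ab nth_in_take[OF rq q(2)] by blast
          obtain p where p: "p < r" "Cs ! r \<inter> \<Union> (set (take r Cs)) \<subseteq> Cs ! p"
            using perf[of r] rq less.prems by auto
          show ?thesis using less.IH[OF p(1)] p aH bH less.prems by auto
        qed
      qed
    qed
    have ne: "a \<noteq> b" using ab by auto
    have "(a, b) \<notin> E"
    proof
      assume e: "(a, b) \<in> E"
      hence "complete_set V E {a, b}" using EV Esym ne unfolding complete_set_def by auto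
      then obtain C where "is_clique V E C" "{a, b} \<subseteq> C" using complete_in_clique[OF finV] by blast
      then obtain r where "r < length Cs" "Cs ! r = C" using cliq by (metis in_set_conv_nth)
      thus False using noclq \<open>{a, b} \<subseteq> C\<close> by blast
    qed
    hence "(b, a) \<notin> E" using Esym by blast
    thus ?thesis using \<open>(a, b) \<notin> E\<close> ne unfolding M_def graph_restrict_def by auto
  qed
  define cond where "cond q = pos_def_on (Cs ! q \<inter> \<Union> (set (take q Cs)))
     (\<lambda>i j. schur_on (\<Union> (set (take q Cs)) - Cs ! q \<inter> \<Union> (set (take q Cs))) M i j
          + schur_on (Cs ! q - Cs ! q \<inter> \<Union> (set (take q Cs))) M i j - M i j)" for q
  have main: "k \<le> length Cs \<Longrightarrow> pos_def_on (\<Union> (set (take k Cs))) M \<longleftrightarrow> (\<forall>q. 1 \<le> q \<and> q < k \<longrightarrow> cond q)" for k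
  proof (induction k)
    case 0
    show ?case unfolding pd_qf sym_on_def by simp
  next
    case (Suc k)
    hence kl: "k < length Cs" by simp
    have tk: "\<Union> (set (take (Suc k) Cs)) = \<Union> (set (take k Cs)) \<union> Cs ! k"
      using take_Suc_conv_app_nth[OF kl] by (simp add: Un_commute)
    have ck: "Cs ! k \<in> set Cs" using kl by simp
    show ?case
    proof (cases "k = 0")
      case True
      have "pos_def_on (Cs ! 0) M" using pdClique ck True by simp
      thus ?thesis using tk True by simp
    next
      case False
      have st: "pos_def_on (\<Union> (set (take k Cs)) \<union> Cs ! k) M \<longleftrightarrow> pos_def_on (\<Union> (set (take k Cs))) M \<and> cond k"
        unfolding cond_def
      proof (rule step)
        show "finite (\<Union> (set (take k Cs)))" using HV finV finite_subset by blast
        show "finite (Cs ! k)" using CV[OF ck] finV finite_subset by blast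
        show "sym_on (\<Union> (set (take k Cs)) \<union> Cs ! k) M" using symM HV CV[OF ck] unfolding sym_on_def by blast
        show "pos_def_on (Cs ! k) M" using pdClique[OF ck] .
        show "\<And>a b. a \<in> \<Union> (set (take k Cs)) - Cs ! k \<Longrightarrow> b \<in> Cs ! k - \<Union> (set (take k Cs)) \<Longrightarrow> M a b = 0 \<and> M b a = 0"
          using zero[of k] False kl by simp
      qed
      show ?thesis unfolding tk st using Suc.IH kl False less_Suc_eq by auto
    qed
  qed
  have "pos_def_on V M \<longleftrightarrow> (\<forall>q. 1 \<le> q \<and> q < length Cs \<longrightarrow> cond q)"
    using main[of "length Cs"] UV by simp
  thus ?thesis unfolding V_def M_def cond_def Let_def by simp
qed

end
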